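(* Let $\tau(t)$ be a tau function of the KP hierarchy, $n\ge1$, and $\alpha_1,\dots,\alpha_n$ nonzero distinct complex numbers. Put $f(t,\alpha,\beta)=\frac{\tau(t+[\beta]-[\alpha])}{\beta-\alpha}$ and, for $|\beta|<|\alpha|$, expand $f(t,\alpha,\beta)=\sum_{j\ge0}f_j(t,\alpha)\beta^j$. Let $D=\det\big(f(t,\alpha_j,\beta_i)\big)_{1\le i,j\le n}$ and $F=D/\prod_{1\le i<j\le n}(\beta_j-\beta_i)$, which extends holomorphically to $\beta_i=0$. Define $F_0=F$ and $F_k=F_{k-1}|_{\beta_k=0}$ for $1\le k\le n$. Let $\mathcal B_k=\prod_{k\le i<j\le n}(\beta_j-\beta_i)$ for $1\le k\le n-1$ and $\mathcal B_n=\mathcal B_{n+1}=1$. Then for $1\le k\le n$, $$F_k=\frac{D_k}{\mathcal B_{k+1}\prod_{j=k+1}^n\beta_j^k},$$ where $D_k$ is the $n\times n$ determinant whose $(i,j)$ entry is $f_{i-1}(t,\alpha_j)$ for $1\le i\le k$ and $f(t,\alpha_j,\beta_i)$ for $k+1\le i\le n$ (the empty product for $k=n$ being $1$). In particular $F_n=\det\big(f_{i-1}(t,\alpha_j)\big)_{1\le i,j\le n}$.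
   Context: Let $t=(t_1,t_2,t_3,\dots)$ be infinitely many variables. For a complex number $z$ put $[z]=(z,z^2/2,z^3/3,\dots)$ and $\eta(t,z)=\sum_{j\ge1}t_jz^j$. A tau function of the KP hierarchy is a nonzero function $\tau(t)$ satisfying the bilinear identity $\mathrm{res}_{z=0}\,\tau(t-s-[z])\tau(t+s+[z])e^{-2\eta(s,z^{-1})}\frac{dz}{z^2}=0$ for all $s=(s_1,s_2,\dots)$. *)

theory Defs
  imports "HOL-Complex_Analysis.Complex_Analysis" "Jordan_Normal_Form.Determinant"
begin

text \<open>Times t = (t_1, t_2, ...) are encoded as t :: nat => complex with t j = t_(j+1).\<close>

definition kp_bracket :: "complex \<Rightarrow> nat \<Rightarrow> complex" where
  "kp_bracket z = (\<lambda>j. z ^ Suc j / of_nat (Suc j))"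

definition kp_eta :: "(nat \<Rightarrow> complex) \<Rightarrow> complex \<Rightarrow> complex" where
  "kp_eta s z = (\<Sum>j. s j * z ^ Suc j)"

text \<open>KP tau function: nonzero, and the bilinear residue identity holds
  (for all finitely supported s, where eta(s, 1/z) is a finite sum).\<close>
definition KP_tau :: "((nat \<Rightarrow> complex) \<Rightarrow> complex) \<Rightarrow> bool" where
  "KP_tau tau \<longleftrightarrow> (\<exists>t. tau t \<noteq> 0) \<and>
     (\<forall>t s. finite {j. s j \<noteq> 0} \<longrightarrow>
        residue (\<lambda>z. tau (\<lambda>j. t j - s j - kp_bracket z j) * tau (\<lambda>j. t j + s j + kp_bracket z j)
                      * exp (- 2 * kp_eta s (1 / z)) / z ^ 2) 0 = 0)"

definition kp_f :: "((nat \<Rightarrow> complex) \<Rightarrow> complex) \<Rightarrow> (nat \<Rightarrow> complex) \<Rightarrow> complex \<Rightarrow> complex \<Rightarrow> complex" where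
  "kp_f tau t a b = tau (\<lambda>j. t j + kp_bracket b j - kp_bracket a j) / (b - a)"

definition kp_fcoef :: "((nat \<Rightarrow> complex) \<Rightarrow> complex) \<Rightarrow> (nat \<Rightarrow> complex) \<Rightarrow> nat \<Rightarrow> complex \<Rightarrow> complex" where
  "kp_fcoef tau t m a = (deriv ^^ m) (kp_f tau t a) 0 / fact m"

text \<open>All indices are 0-based: alpha_(j+1) = al j, beta_(i+1) = b i.\<close>
definition kp_D :: "((nat \<Rightarrow> complex) \<Rightarrow> complex) \<Rightarrow> (nat \<Rightarrow> complex) \<Rightarrow> (nat \<Rightarrow> complex) \<Rightarrow> nat \<Rightarrow> (nat \<Rightarrow> complex) \<Rightarrow> complex" where
  "kp_D tau t al n b = det (mat n n (\<lambda>(i, j). kp_f tau t (al j) (b i)))"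

text \<open>kp_B k b = prod over k <= i < j < n of (b j - b i)  (paper's B_(k+1)).\<close>
definition kp_B :: "nat \<Rightarrow> nat \<Rightarrow> (nat \<Rightarrow> complex) \<Rightarrow> complex" where
  "kp_B n k b = (\<Prod>i\<in>{k..<n}. \<Prod>j\<in>{Suc i..<n}. (b j - b i))"

text \<open>F_0 = D / Vandermonde; F_(k+1) is F_k restricted to beta_(k+1) = 0, i.e. the
  limit (value of the holomorphic extension) as b k tends to 0.\<close>
fun kp_F :: "((nat \<Rightarrow> complex) \<Rightarrow> complex) \<Rightarrow> (nat \<Rightarrow> complex) \<Rightarrow> (nat \<Rightarrow> complex) \<Rightarrow> nat \<Rightarrow> nat \<Rightarrow> (nat \<Rightarrow> complex) \<Rightarrow> complex" where
  "kp_F tau t al n 0 b = kp_D tau t al n b / kp_B n 0 b"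
| "kp_F tau t al n (Suc k) b = Lim (at 0) (\<lambda>x. kp_F tau t al n k (b(k := x)))"

definition kp_Dk :: "((nat \<Rightarrow> complex) \<Rightarrow> complex) \<Rightarrow> (nat \<Rightarrow> complex) \<Rightarrow> (nat \<Rightarrow> complex) \<Rightarrow> nat \<Rightarrow> nat \<Rightarrow> (nat \<Rightarrow> complex) \<Rightarrow> complex" where
  "kp_Dk tau t al n k b = det (mat n n (\<lambda>(i, j).
      if i < k then kp_fcoef tau t i (al j) else kp_f tau t (al j) (b i)))"

end

theory Submission
  imports Defs
begin

lemma taylor_lim:
  fixes g :: "complex \<Rightarrow> complex"
  assumes hol: "g holomorphic_on ball 0 r" and r: "r > 0"
  shows "((\<lambda>x. (g x - (\<Sum>m<k. (deriv^^m) g 0 / fact m * x^m)) / x^k)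
          \<longlongrightarrow> (deriv^^k) g 0 / fact k) (at 0)"
proof -
  define c where "c m = (deriv^^m) g 0 / fact m" for m
  have ser: "(\<lambda>m. c m * w^m) sums g w" if "w \<in> ball 0 r" for w
    using holomorphic_power_series[OF hol that] by (simp add: c_def)
  have shift: "(\<lambda>m. c (m+k) * w^(m+k)) sums (g w - (\<Sum>m<k. c m * w^m))" if "w \<in> ball 0 r" for w
    using ser[OF that] sums_iff_shift[of "\<lambda>m. c m * w^m" k] by simp
  have shift2: "(\<lambda>m. c (m+k) * w^m) sums ((g w - (\<Sum>m<k. c m * w^m)) / w^k)"
    if "w \<in> ball 0 r" "w \<noteq> 0" for w
  proof -
    have "(\<lambda>m. c (m+k) * w^(m+k) / w^k) sums ((g w - (\<Sum>m<k. c m * w^m)) / w^k)"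
      by (rule sums_divide[OF shift[OF that(1)]])
    moreover have "(\<lambda>m. c (m+k) * w^(m+k) / w^k) = (\<lambda>m. c (m+k) * w^m)"
      using that(2) by (simp add: power_add)
    ultimately show ?thesis by simp
  qed
  define P where "P x = (\<Sum>m. c (m+k) * x^m)" for x
  have eq: "(g x - (\<Sum>m<k. c m * x^m)) / x^k = P x" if "x \<in> ball 0 r" "x \<noteq> 0" for x
    using shift2[OF that] unfolding P_def by (simp add: sums_iff)
  define K where "K = complex_of_real (r/2)"
  have K: "K \<in> ball 0 r" "K \<noteq> 0" using r by (auto simp: K_def)
  have "summable (\<lambda>m. c (m+k) * K^m)" using shift2[OF K] by (auto simp: sums_iff)
  then have "isCont P 0" unfolding P_def
    by (rule isCont_powser) (use r K_def in auto)
  then have "(P \<longlongrightarrow> P 0) (at 0)" by (simp add: isCont_def)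
  moreover have "P 0 = c k" unfolding P_def using powser_zero[of "\<lambda>m. c (m+k)"] by simp
  moreover have ev: "eventually (\<lambda>x. P x = (g x - (\<Sum>m<k. c m * x^m)) / x^k) (at 0)"
    unfolding eventually_at using r by (intro exI[of _ r]) (auto simp: eq dist_norm)
  ultimately have "((\<lambda>x. (g x - (\<Sum>m<k. c m * x^m)) / x^k) \<longlongrightarrow> c k) (at 0)"
    using tendsto_cong[OF ev] by simp
  then show ?thesis by (simp add: c_def)
qed

lemma det_row_lin:
  fixes E :: "nat \<Rightarrow> nat \<Rightarrow> 'a::comm_ring_1"
  assumes "r < n"
  shows "det (mat n n (\<lambda>(i,j). if i = r then v j else E i j)) =
     (\<Sum>j<n. v j * cofactor (mat n n (\<lambda>(i,j). if i = r then 0 else E i j)) r j)"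
proof -
  have "det (mat n n (\<lambda>(i,j). if i = r then v j else E i j)) =
     (\<Sum>j<n. (mat n n (\<lambda>(i,j). if i = r then v j else E i j)) $$ (r,j) *
        cofactor (mat n n (\<lambda>(i,j). if i = r then v j else E i j)) r j)"
    by (rule laplace_expansion_row) (use assms in auto)
  also have "\<dots> = (\<Sum>j<n. v j * cofactor (mat n n (\<lambda>(i,j). if i = r then 0 else E i j)) r j)"
  proof (rule sum.cong[OF refl])
    fix j assume j: "j \<in> {..<n}"
    have "mat_delete (mat n n (\<lambda>(i,j). if i = r then v j else E i j)) r j =
          mat_delete (mat n n (\<lambda>(i,j). if i = r then 0 else E i j)) r j"
      unfolding mat_delete_def by (rule eq_matI) (use assms in auto)
    then show "(mat n n (\<lambda>(i,j). if i = r then v j else E i j)) $$ (r,j) *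
        cofactor (mat n n (\<lambda>(i,j). if i = r then v j else E i j)) r j =
        v j * cofactor (mat n n (\<lambda>(i,j). if i = r then 0 else E i j)) r j"
      using j assms by (simp add: cofactor_def)
  qed
  finally show ?thesis .
qed


lemma ev_norm: "r > 0 \<Longrightarrow> eventually (\<lambda>x::complex. norm x < r) (at 0)"
  unfolding eventually_at by (intro exI[of _ r]) (auto simp: dist_norm)

lemma step2:
  assumes hol: "\<forall>j<n. kp_f tau t (al j) holomorphic_on ball 0 (norm (al j))"
    and al0: "\<forall>j<n. al j \<noteq> 0" and p: "p < n"
    and IH: "\<forall>b. ((\<forall>i\<in>{p..<n}. b i \<noteq> 0 \<and> (\<forall>j<n. norm (b i) < norm (al j))) \<and> inj_on b {p..<n}) \<longrightarrow>
         kp_F tau t al n p b = kp_Dk tau t al n p b / (kp_B n p b * (\<Prod>j\<in>{p..<n}. b j ^ p))"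
    and cb: "\<forall>i\<in>{Suc p..<n}. b i \<noteq> 0 \<and> (\<forall>j<n. norm (b i) < norm (al j))"
    and ib: "inj_on b {Suc p..<n}"
  shows "((\<lambda>x. kp_F tau t al n p (b(p := x))) \<longlongrightarrow>
     kp_Dk tau t al n (Suc p) b / (kp_B n (Suc p) b * (\<Prod>j\<in>{Suc p..<n}. b j ^ Suc p))) (at 0)"
proof -
  define g where "g j = kp_f tau t (al j)" for j
  define c where "c j m = kp_fcoef tau t m (al j)" for j m
  define E where "E i j = (if i < Suc p then c j i else g j (b i))" for i j
  define Cf where "Cf j = cofactor (mat n n (\<lambda>(i,j). if i = p then 0 else E i j)) p j" for j
  have L: "det (mat n n (\<lambda>(i,j). if i = p then v j else E i j)) = (\<Sum>j<n. v j * Cf j)" for v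
    unfolding Cf_def by (rule det_row_lin[OF p])
  have a: "kp_Dk tau t al n (Suc p) b = (\<Sum>j<n. c j p * Cf j)"
  proof -
    have "(\<lambda>(i,j). if i < Suc p then kp_fcoef tau t i (al j) else kp_f tau t (al j) (b i))
       = (\<lambda>(i,j). if i = p then c j p else E i j)"
      by (auto simp: fun_eq_iff E_def c_def g_def)
    then show ?thesis unfolding kp_Dk_def L[symmetric] by simp
  qed
  have bx: "kp_Dk tau t al n p (b(p:=x)) = (\<Sum>j<n. g j x * Cf j)" for x
  proof -
    have "(\<lambda>(i,j). if i < p then kp_fcoef tau t i (al j) else kp_f tau t (al j) ((b(p:=x)) i))
       = (\<lambda>(i,j). if i = p then g j x else E i j)"
      by (auto simp: fun_eq_iff E_def c_def g_def)
    then show ?thesis unfolding kp_Dk_def L[symmetric] by simp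
  qed
  have zero: "(\<Sum>j<n. c j m * Cf j) = 0" if m: "m < p" for m
  proof -
    have "det (mat n n (\<lambda>(i,j). if i = p then c j m else E i j)) = 0"
      by (rule det_identical_rows[of _ n m p]) (use m p in \<open>auto simp: E_def\<close>)
    then show ?thesis using L by simp
  qed
  define h where "h j x = (g j x - (\<Sum>m<p. c j m * x^m)) / x^p" for j x
  have hlim: "((\<lambda>x. \<Sum>j<n. Cf j * h j x) \<longlongrightarrow> (\<Sum>j<n. Cf j * c j p)) (at 0)"
  proof (intro tendsto_sum tendsto_mult_left)
    fix j assume j: "j \<in> {..<n}"
    have "((\<lambda>x. (g j x - (\<Sum>m<p. (deriv^^m) (g j) 0 / fact m * x^m)) / x^p)
          \<longlongrightarrow> (deriv^^p) (g j) 0 / fact p) (at 0)"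
      by (rule taylor_lim[of _ "norm (al j)"]) (use hol al0 j in \<open>auto simp: g_def\<close>)
    then show "(h j \<longlongrightarrow> c j p) (at 0)"
      unfolding h_def c_def kp_fcoef_def g_def by simp
  qed
  have Nx: "kp_Dk tau t al n p (b(p:=x)) / x^p = (\<Sum>j<n. Cf j * h j x)" for x
  proof -
    have "(\<Sum>j<n. Cf j * (\<Sum>m<p. c j m * x^m)) = (\<Sum>m<p. x^m * (\<Sum>j<n. c j m * Cf j))"
      by (simp add: sum_distrib_left sum.swap[of _ "{..<n}"] ac_simps)
    also have "\<dots> = 0" using zero by simp
    finally have z: "(\<Sum>j<n. Cf j * (\<Sum>m<p. c j m * x^m)) = 0" .
    have "(\<Sum>j<n. Cf j * h j x) = ((\<Sum>j<n. Cf j * g j x) - (\<Sum>j<n. Cf j * (\<Sum>m<p. c j m * x^m))) / x^p"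
    proof -
      have "(\<Sum>j<n. Cf j * h j x) = (\<Sum>j<n. (Cf j * g j x - Cf j * (\<Sum>m<p. c j m * x^m)) / x^p)"
        unfolding h_def by (intro sum.cong refl) (simp add: right_diff_distrib)
      also have "\<dots> = (\<Sum>j<n. Cf j * g j x - Cf j * (\<Sum>m<p. c j m * x^m)) / x^p"
        by (simp only: sum_divide_distrib)
      also have "\<dots> = ((\<Sum>j<n. Cf j * g j x) - (\<Sum>j<n. Cf j * (\<Sum>m<p. c j m * x^m))) / x^p"
        by (simp only: sum_subtractf)
      finally show ?thesis .
    qed
    then show ?thesis using z bx by (simp add: ac_simps)
  qed
  define Bk where "Bk = kp_B n (Suc p) b"
  define Pb where "Pb = (\<Prod>j\<in>{Suc p..<n}. b j ^ p)"
  define Den where "Den x = (\<Prod>j\<in>{Suc p..<n}. (b j - x)) * Bk * Pb" for x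
  have denlim: "(Den \<longlongrightarrow> (\<Prod>j\<in>{Suc p..<n}. (b j - 0)) * Bk * Pb) (at 0)"
    unfolding Den_def by (intro tendsto_intros)
  have denval: "(\<Prod>j\<in>{Suc p..<n}. (b j - 0)) * Bk * Pb = Bk * (\<Prod>j\<in>{Suc p..<n}. b j ^ Suc p)"
    by (simp add: Pb_def prod.distrib[symmetric] ac_simps)
  have Bk0: "Bk \<noteq> 0"
  proof -
    have "b j - b i \<noteq> 0" if i: "i \<in> {Suc p..<n}" and j: "j \<in> {Suc i..<n}" for i j
    proof -
      have "j \<in> {Suc p..<n}" "j \<noteq> i" using i j by auto
      then show ?thesis using inj_onD[OF ib _ _ i] by force
    qed
    then show ?thesis unfolding Bk_def kp_B_def by (simp add: prod_zero_iff)
  qed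
  have Pb0: "(\<Prod>j\<in>{Suc p..<n}. b j ^ Suc p) \<noteq> 0"
    using cb by (auto simp: prod_zero_iff)
  have ev: "eventually (\<lambda>x::complex. x \<noteq> 0 \<and> (\<forall>j\<in>{..<n}. norm x < norm (al j)) \<and>
       (\<forall>i\<in>{Suc p..<n}. norm x < norm (b i))) (at 0)"
  proof -
    have e1: "eventually (\<lambda>x. x \<noteq> 0) (at (0::complex))"
      unfolding eventually_at by (intro exI[of _ 1]) auto
    have e2: "eventually (\<lambda>x::complex. \<forall>j\<in>{..<n}. norm x < norm (al j)) (at 0)"
      by (rule eventually_ball_finite) (use al0 ev_norm in auto)
    have e3: "eventually (\<lambda>x::complex. \<forall>i\<in>{Suc p..<n}. norm x < norm (b i)) (at 0)"
      by (rule eventually_ball_finite) (use cb ev_norm in auto)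
    show ?thesis using e1 e2 e3 by (intro eventually_conj)
  qed
  have eqF: "eventually (\<lambda>x. kp_F tau t al n p (b(p := x)) =
       (\<Sum>j<n. Cf j * h j x) / Den x) (at 0)"
    using ev
  proof (rule eventually_mono)
    fix x :: complex assume x: "x \<noteq> 0 \<and> (\<forall>j\<in>{..<n}. norm x < norm (al j)) \<and>
       (\<forall>i\<in>{Suc p..<n}. norm x < norm (b i))"
    have cond: "(\<forall>i\<in>{p..<n}. (b(p:=x)) i \<noteq> 0 \<and> (\<forall>j<n. norm ((b(p:=x)) i) < norm (al j)))
        \<and> inj_on (b(p:=x)) {p..<n}"
    proof
      show "\<forall>i\<in>{p..<n}. (b(p:=x)) i \<noteq> 0 \<and> (\<forall>j<n. norm ((b(p:=x)) i) < norm (al j))"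
        using x cb by auto
      have ins: "{p..<n} = insert p {Suc p..<n}" using p by auto
      have "inj_on (b(p:=x)) {Suc p..<n}"
        using ib by (rule inj_on_cong[THEN iffD1, rotated]) auto
      moreover have "x \<notin> (b(p:=x)) ` {Suc p..<n}"
        using x by force
      ultimately show "inj_on (b(p:=x)) {p..<n}"
        unfolding ins by (simp add: inj_on_insert)
    qed
    have B: "kp_B n p (b(p:=x)) = (\<Prod>j\<in>{Suc p..<n}. (b j - x)) * Bk"
    proof -
      have ins: "{p..<n} = insert p {Suc p..<n}" using p by auto
      have "kp_B n p (b(p:=x)) = (\<Prod>j\<in>{Suc p..<n}. ((b(p:=x)) j - (b(p:=x)) p)) *
            (\<Prod>i\<in>{Suc p..<n}. \<Prod>j\<in>{Suc i..<n}. ((b(p:=x)) j - (b(p:=x)) i))"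
        unfolding kp_B_def ins by simp
      also have "\<dots> = (\<Prod>j\<in>{Suc p..<n}. (b j - x)) * Bk"
        unfolding Bk_def kp_B_def
        by (intro arg_cong2[where f="(*)"] prod.cong refl) auto
      finally show ?thesis .
    qed
    have P: "(\<Prod>j\<in>{p..<n}. (b(p:=x)) j ^ p) = x^p * Pb"
    proof -
      have ins: "{p..<n} = insert p {Suc p..<n}" using p by auto
      show ?thesis unfolding ins Pb_def by (subst prod.insert) (auto intro!: prod.cong)
    qed
    have "kp_F tau t al n p (b(p := x)) = kp_Dk tau t al n p (b(p:=x)) /
        ((\<Prod>j\<in>{Suc p..<n}. (b j - x)) * Bk * (x^p * Pb))"
      using IH cond B P by simp
    also have "\<dots> = (kp_Dk tau t al n p (b(p:=x)) / x^p) / Den x"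
      unfolding Den_def by (simp add: divide_divide_eq_left ac_simps)
    finally show "kp_F tau t al n p (b(p := x)) = (\<Sum>j<n. Cf j * h j x) / Den x"
      using Nx by simp
  qed
  have lim1: "((\<lambda>x. (\<Sum>j<n. Cf j * h j x) / Den x) \<longlongrightarrow>
      (\<Sum>j<n. Cf j * c j p) / ((\<Prod>j\<in>{Suc p..<n}. (b j - 0)) * Bk * Pb)) (at 0)"
    by (rule tendsto_divide[OF hlim denlim]) (unfold denval, use Bk0 Pb0 in simp)
  have val: "(\<Sum>j<n. Cf j * c j p) / ((\<Prod>j\<in>{Suc p..<n}. (b j - 0)) * Bk * Pb) =
     kp_Dk tau t al n (Suc p) b / (kp_B n (Suc p) b * (\<Prod>j\<in>{Suc p..<n}. b j ^ Suc p))"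
  proof -
    have "(\<Sum>j<n. Cf j * c j p) = (\<Sum>j<n. c j p * Cf j)" by (simp add: mult.commute)
    then show ?thesis unfolding a Bk_def[symmetric] denval by (simp only:)
  qed
  show ?thesis using tendsto_cong[OF eqF] lim1 unfolding val by simp
qed

theorem mainTheorem5:
  fixes tau :: "(nat \<Rightarrow> complex) \<Rightarrow> complex"
    and t :: "nat \<Rightarrow> complex" and al :: "nat \<Rightarrow> complex" and n :: nat
  assumes "KP_tau tau"
    and "n \<ge> 1"
    and "\<forall>j<n. al j \<noteq> 0"
    and "inj_on al {..<n}"
    and "\<forall>j<n. (\<lambda>z. tau (\<lambda>i. t i + kp_bracket z i - kp_bracket (al j) i)) holomorphic_on ball 0 (norm (al j))"
  shows "(\<forall>k\<in>{1..n}. \<forall>b. ((\<forall>i\<in>{k..<n}. b i \<noteq> 0 \<and> (\<forall>j<n. norm (b i) < norm (al j)))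
              \<and> inj_on b {k..<n}) \<longrightarrow>
           ((\<lambda>x. kp_F tau t al n (k - 1) (b(k - 1 := x))) \<longlongrightarrow>
              kp_Dk tau t al n k b / (kp_B n k b * (\<Prod>j\<in>{k..<n}. b j ^ k))) (at 0))
       \<and> (\<forall>b. kp_F tau t al n n b = det (mat n n (\<lambda>(i, j). kp_fcoef tau t i (al j))))"
proof -
  have hol: "\<forall>j<n. kp_f tau t (al j) holomorphic_on ball 0 (norm (al j))"
  proof (intro allI impI)
    fix j assume j: "j < n"
    have ne: "z - al j \<noteq> 0" if "z \<in> ball 0 (norm (al j))" for z
      using that by auto
    have "(\<lambda>z. tau (\<lambda>i. t i + kp_bracket z i - kp_bracket (al j) i) / (z - al j))
        holomorphic_on ball 0 (norm (al j))"
      by (intro holomorphic_on_divide holomorphic_intros) (use assms(5) j ne in auto)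
    then show "kp_f tau t (al j) holomorphic_on ball 0 (norm (al j))"
      unfolding kp_f_def by simp
  qed
  have al0: "\<forall>j<n. al j \<noteq> 0" using assms(3) .
  have Psi: "\<forall>b. ((\<forall>i\<in>{p..<n}. b i \<noteq> 0 \<and> (\<forall>j<n. norm (b i) < norm (al j))) \<and> inj_on b {p..<n}) \<longrightarrow>
         kp_F tau t al n p b = kp_Dk tau t al n p b / (kp_B n p b * (\<Prod>j\<in>{p..<n}. b j ^ p))"
    if "p \<le> n" for p
    using that
  proof (induction p)
    case 0
    have "kp_Dk tau t al n 0 b = kp_D tau t al n b" for b
      by (simp add: kp_Dk_def kp_D_def)
    then show ?case by simp
  next
    case (Suc p)
    then have p: "p < n" by simp
    have IH: "\<forall>b. ((\<forall>i\<in>{p..<n}. b i \<noteq> 0 \<and> (\<forall>j<n. norm (b i) < norm (al j))) \<and> inj_on b {p..<n}) \<longrightarrow>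
         kp_F tau t al n p b = kp_Dk tau t al n p b / (kp_B n p b * (\<Prod>j\<in>{p..<n}. b j ^ p))"
      using Suc by simp
    show ?case
    proof (intro allI impI)
      fix b :: "nat \<Rightarrow> complex" assume cb: "(\<forall>i\<in>{Suc p..<n}. b i \<noteq> 0 \<and> (\<forall>j<n. norm (b i) < norm (al j))) \<and> inj_on b {Suc p..<n}"
      have "((\<lambda>x. kp_F tau t al n p (b(p := x))) \<longlongrightarrow>
         kp_Dk tau t al n (Suc p) b / (kp_B n (Suc p) b * (\<Prod>j\<in>{Suc p..<n}. b j ^ Suc p))) (at 0)"
        using step2[OF hol al0 p IH] cb by blast
      then show "kp_F tau t al n (Suc p) b =
         kp_Dk tau t al n (Suc p) b / (kp_B n (Suc p) b * (\<Prod>j\<in>{Suc p..<n}. b j ^ Suc p))"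
        by (simp add: tendsto_Lim)
    qed
  qed
  show ?thesis
  proof (intro conjI ballI allI impI)
    fix k and b :: "nat \<Rightarrow> complex" assume k: "k \<in> {1..n}"
      and cb: "(\<forall>i\<in>{k..<n}. b i \<noteq> 0 \<and> (\<forall>j<n. norm (b i) < norm (al j))) \<and> inj_on b {k..<n}"
    obtain p where kp: "k = Suc p" and p: "p < n" using k by (cases k) auto
    show "((\<lambda>x. kp_F tau t al n (k - 1) (b(k - 1 := x))) \<longlongrightarrow>
              kp_Dk tau t al n k b / (kp_B n k b * (\<Prod>j\<in>{k..<n}. b j ^ k))) (at 0)"
      using step2[OF hol al0 p Psi[of p]] cb p unfolding kp by simp
  next
    fix b
    have "kp_F tau t al n n b = kp_Dk tau t al n n b / (kp_B n n b * (\<Prod>j\<in>{n..<n}. b j ^ n))"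
      using Psi[of n] by simp
    also have "\<dots> = kp_Dk tau t al n n b" by (simp add: kp_B_def)
    also have "\<dots> = det (mat n n (\<lambda>(i, j). kp_fcoef tau t i (al j)))"
      unfolding kp_Dk_def by (rule arg_cong[where f=det], rule eq_matI) auto
    finally show "kp_F tau t al n n b = det (mat n n (\<lambda>(i, j). kp_fcoef tau t i (al j)))" .
  qed
qed

end
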